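(* Let the premiums $\{X_n, n\geq 1\}$ and the claims $\{Y_n, n\geq 1\}$ be sequences of nonnegative, identically distributed, independent random variables with finite expectations, and suppose the sequences $\{X_n\}$ and $\{Y_n\}$ are mutually independent. Let $r>0$ be a constant and set $I_n=r$ for all $n\geq 1$. For $u\geq 0$ define $U_0=u$, $U_n=(U_{n-1}+X_n)(1+r)-Y_n$ for $n\geq 1$, and $\Psi(u)=\mathbb{P}\big(\bigcup_{n=1}^\infty\{U_n<0\}\big)$. If there exists a positive real number $R$ satisfying $$\mathbb{E}\Big(e^{R\left(Y_1(1+r)^{-1}-X_1\right)}\Big)\leq 1,$$ then $\Psi(u)\leq e^{-Ru}$ for all $u>0$. *)

theory Defs
  imports "HOL-Probability.Probability"
begin

fun surplus :: "real \<Rightarrow> real \<Rightarrow> (nat \<Rightarrow> 'a \<Rightarrow> real) \<Rightarrow> (nat \<Rightarrow> 'a \<Rightarrow> real) \<Rightarrow> nat \<Rightarrow> 'a \<Rightarrow> real" where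
  "surplus u r X Y 0 \<omega> = u"
| "surplus u r X Y (Suc n) \<omega> = (surplus u r X Y n \<omega> + X (Suc n) \<omega>) * (1 + r) - Y (Suc n) \<omega>"

definition ruin_prob :: "'a measure \<Rightarrow> real \<Rightarrow> (nat \<Rightarrow> 'a \<Rightarrow> real) \<Rightarrow> (nat \<Rightarrow> 'a \<Rightarrow> real) \<Rightarrow> real \<Rightarrow> real" where
  "ruin_prob M r X Y u0 = measure M (\<Union>n\<in>{1..}. {\<omega> \<in> space M. surplus u0 r X Y n \<omega> < 0})"

end

theory Submission
  imports Defs
begin

fun Fp :: "real \<Rightarrow> real \<Rightarrow> nat \<Rightarrow> (nat + nat \<Rightarrow> real) \<Rightarrow> real" where
  "Fp u r 0 x = u"
| "Fp u r (Suc k) x = (if Fp u r k x < 0 then Fp u r k x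
     else Fp u r k x - (1/(1+r))^k * (x (Inr (Suc k)) / (1+r) - x (Inl (Suc k))))"

lemma Fp_meas:
  assumes "\<And>j. 1 \<le> j \<Longrightarrow> j \<le> k \<Longrightarrow> (\<lambda>\<omega>. x \<omega> (Inl j)) \<in> borel_measurable N"
    and "\<And>j. 1 \<le> j \<Longrightarrow> j \<le> k \<Longrightarrow> (\<lambda>\<omega>. x \<omega> (Inr j)) \<in> borel_measurable N"
  shows "(\<lambda>\<omega>. Fp u r k (x \<omega>)) \<in> borel_measurable N"
  using assms
proof (induction k)
  case 0
  then show ?case by simp
next
  case (Suc k)
  have IH[measurable]: "(\<lambda>\<omega>. Fp u r k (x \<omega>)) \<in> borel_measurable N"
    using Suc by auto
  have [measurable]: "(\<lambda>\<omega>. x \<omega> (Inl (Suc k))) \<in> borel_measurable N"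
       "(\<lambda>\<omega>. x \<omega> (Inr (Suc k))) \<in> borel_measurable N" using Suc.prems by auto
  show ?case by simp measurable
qed

lemma Fp_restrict:
  assumes "Inl ` {1..k} \<subseteq> K" "Inr ` {1..k} \<subseteq> K"
  shows "Fp u r k (restrict x K) = Fp u r k x"
  using assms
proof (induction k)
  case 0
  then show ?case by simp
next
  case (Suc k)
  have a: "Inl ` {1..k} \<subseteq> K" using Suc.prems(1) by (auto simp: image_subset_iff)
  have b: "Inr ` {1..k} \<subseteq> K" using Suc.prems(2) by (auto simp: image_subset_iff)
  have IH: "Fp u r k (restrict x K) = Fp u r k x" by (rule Suc.IH[OF a b])
  have "Inl (Suc k) \<in> K" "Inr (Suc k) \<in> K" using Suc.prems by auto
  then have c: "restrict x K (Inl (Suc k)) = x (Inl (Suc k))" "restrict x K (Inr (Suc k)) = x (Inr (Suc k))"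
    by simp_all
  show ?case by (simp only: Fp.simps IH c)
qed

lemma Fp_surplus:
  fixes X Y :: "nat \<Rightarrow> 'a \<Rightarrow> real" and \<omega> :: 'a
  assumes r: "r > 0" and u: "u > 0"
  defines "xw \<equiv> (\<lambda>i. case i of Inl n \<Rightarrow> X n \<omega> | Inr n \<Rightarrow> Y n \<omega>)"
  shows "(Fp u r n xw < 0 \<longleftrightarrow> (\<exists>k\<in>{1..n}. surplus u r X Y k \<omega> < 0)) \<and>
         (Fp u r n xw \<ge> 0 \<longrightarrow> Fp u r n xw = (1/(1+r))^n * surplus u r X Y n \<omega>)"
proof (induction n)
  case 0
  then show ?case using u by simp
next
  case (Suc n)
  have vpos: "(1/(1+r))^n > 0" using r by simp
  show ?case
  proof (cases "Fp u r n xw < 0")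
    case True
    then show ?thesis using Suc by auto
  next
    case False
    have eq: "Fp u r n xw = (1/(1+r))^n * surplus u r X Y n \<omega>" using Suc False by auto
    have nok: "\<not> (\<exists>k\<in>{1..n}. surplus u r X Y k \<omega> < 0)" using Suc False by auto
    have e2: "Fp u r (Suc n) xw = (1/(1+r))^(Suc n) * surplus u r X Y (Suc n) \<omega>"
    proof -
      have alg: "\<And>a s x y. a * s - a * (y / (1 + r) - x) = a * (1 / (1 + r)) * ((s + x) * (1 + r) - y)"
        using r by (simp add: field_simps)
      have "Fp u r (Suc n) xw = (1/(1+r))^n * surplus u r X Y n \<omega>
             - (1/(1+r))^n * (Y (Suc n) \<omega> / (1+r) - X (Suc n) \<omega>)"
        using False eq by (simp add: xw_def)
      also have "\<dots> = (1/(1+r))^(Suc n) * surplus u r X Y (Suc n) \<omega>"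
        by (subst alg) (simp only: power_Suc2 surplus.simps)
      finally show ?thesis .
    qed
    have "(Fp u r (Suc n) xw < 0) \<longleftrightarrow> surplus u r X Y (Suc n) \<omega> < 0"
    proof -
      have cpos: "(1/(1+r))^(Suc n) > 0" using r by simp
      have cs: "\<And>c s::real. c > 0 \<Longrightarrow> (c * s < 0) = (s < 0)" by (auto simp: mult_less_0_iff)
      show ?thesis unfolding e2 by (rule cs[OF cpos])
    qed
    also have "\<dots> \<longleftrightarrow> (\<exists>k\<in>{1..Suc n}. surplus u r X Y k \<omega> < 0)"
    proof -
      have "{1..Suc n} = insert (Suc n) {1..n}" by auto
      then show ?thesis using nok by (simp only: bex_simps) blast
    qed
    finally show ?thesis using e2 by simp
  qed
qed

lemma eqdist_lemma:
  fixes f :: "real \<Rightarrow> ennreal" and Z :: "nat \<Rightarrow> 'a \<Rightarrow> real" and M :: "'a measure"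
  assumes n: "n \<ge> 1" and f: "f \<in> borel_measurable borel"
      and rvZ: "\<And>n. n \<ge> 1 \<Longrightarrow> Z n \<in> borel_measurable M"
      and idZ: "\<And>n. n \<ge> 1 \<Longrightarrow> distr M borel (Z n) = distr M borel (Z 1)"
  shows "(\<integral>\<^sup>+\<omega>. f (Z n \<omega>) \<partial>M) = (\<integral>\<^sup>+\<omega>. f (Z 1 \<omega>) \<partial>M)"
proof -
    have "(\<integral>\<^sup>+\<omega>. f (Z n \<omega>) \<partial>M) = (\<integral>\<^sup>+x. f x \<partial>distr M borel (Z n))"
      by (rule nn_integral_distr[symmetric]) (use rvZ n f in auto)
    also have "\<dots> = (\<integral>\<^sup>+x. f x \<partial>distr M borel (Z 1))" by (simp only: idZ[OF n])
    also have "\<dots> = (\<integral>\<^sup>+\<omega>. f (Z 1 \<omega>) \<partial>M)"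
      by (rule nn_integral_distr) (use rvZ f in auto)
    finally show ?thesis .
qed

theorem corollary3p3:
  fixes M :: "'a measure" and X Y :: "nat \<Rightarrow> 'a \<Rightarrow> real" and r R :: real
  assumes "prob_space M"
    and rvX: "\<And>n. n \<ge> 1 \<Longrightarrow> X n \<in> borel_measurable M"
    and rvY: "\<And>n. n \<ge> 1 \<Longrightarrow> Y n \<in> borel_measurable M"
    and nonnegX: "\<And>n \<omega>. n \<ge> 1 \<Longrightarrow> \<omega> \<in> space M \<Longrightarrow> X n \<omega> \<ge> 0"
    and nonnegY: "\<And>n \<omega>. n \<ge> 1 \<Longrightarrow> \<omega> \<in> space M \<Longrightarrow> Y n \<omega> \<ge> 0"
    and idX: "\<And>n. n \<ge> 1 \<Longrightarrow> distr M borel (X n) = distr M borel (X 1)"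
    and idY: "\<And>n. n \<ge> 1 \<Longrightarrow> distr M borel (Y n) = distr M borel (Y 1)"
    and intX: "integrable M (X 1)"
    and intY: "integrable M (Y 1)"
    and indep: "prob_space.indep_vars M (\<lambda>_. borel)
                  (\<lambda>i. case i of Inl n \<Rightarrow> X n | Inr n \<Rightarrow> Y n)
                  (Inl ` {1..} \<union> Inr ` {1..})"
    and r_pos: "r > 0"
    and R_pos: "R > 0"
    and lundberg: "(\<integral>\<^sup>+ \<omega>. ennreal (exp (R * (Y 1 \<omega> / (1 + r) - X 1 \<omega>))) \<partial>M) \<le> 1"
  shows "\<forall>u>0. ruin_prob M r X Y u \<le> exp (- R * u)"
proof (intro allI impI)
  fix u :: real assume u: "u > 0"
  interpret P: prob_space M by fact
  define var where "var = (\<lambda>i. case i of Inl n \<Rightarrow> X n | Inr n \<Rightarrow> Y n)"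
  define I where "I = (Inl ` {1..} \<union> Inr ` {1..} :: (nat+nat) set)"
  have ind: "P.indep_vars (\<lambda>_. borel) var I" using indep unfolding var_def I_def .
  define xw where "xw = (\<lambda>\<omega> i. var i \<omega>)"
  have xw_eq: "\<And>\<omega>. xw \<omega> = (\<lambda>i. case i of Inl n \<Rightarrow> X n \<omega> | Inr n \<Rightarrow> Y n \<omega>)"
    by (auto simp: xw_def var_def split: sum.split)
  have Fm[measurable]: "\<And>k. (\<lambda>\<omega>. Fp u r k (xw \<omega>)) \<in> borel_measurable M"
    by (rule Fp_meas) (auto simp: xw_def var_def intro: rvX rvY)

  have split_exp: "(\<integral>\<^sup>+\<omega>. ennreal (exp (R * (Y n \<omega> / (1 + r) - X n \<omega>))) \<partial>M) =
      (\<integral>\<^sup>+\<omega>. ennreal (exp (-R * X n \<omega>)) \<partial>M) * (\<integral>\<^sup>+\<omega>. ennreal (exp (R * (Y n \<omega> / (1 + r)))) \<partial>M)"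
    if n: "n \<ge> 1" for n
  proof -
    define H where "H = (\<lambda>i (x::real). case i of Inl (_::nat) \<Rightarrow> ennreal (exp (-R*x)) | Inr (_::nat) \<Rightarrow> ennreal (exp (R*(x/(1+r)))))"
    have "P.indep_vars (\<lambda>_. borel) (\<lambda>i \<omega>. H i (var i \<omega>)) {Inl n, Inr n}"
      apply (rule P.indep_vars_compose2[OF P.indep_vars_subset[OF ind]])
      using n by (auto simp: I_def H_def split: sum.split)
    from P.indep_vars_nn_integral[OF _ this]
    have eq: "(\<integral>\<^sup>+\<omega>. (\<Prod>i\<in>{Inl n, Inr n}. H i (var i \<omega>)) \<partial>M) =
        (\<Prod>i\<in>{Inl n, Inr n}. \<integral>\<^sup>+\<omega>. H i (var i \<omega>) \<partial>M)"
      by (auto simp: H_def split: sum.split)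
    have pw: "\<And>\<omega>. ennreal (exp (R * (Y n \<omega> / (1 + r) - X n \<omega>))) = ennreal (exp (-R * X n \<omega>)) * ennreal (exp (R * (Y n \<omega> / (1 + r))))"
      by (subst ennreal_mult[symmetric]) (auto simp: exp_add[symmetric] algebra_simps)
    have "(\<Prod>i\<in>{Inl n, Inr n}. H i (var i \<omega>)) = ennreal (exp (R * (Y n \<omega> / (1 + r) - X n \<omega>)))" for \<omega>
      unfolding pw by (simp add: H_def var_def)
    moreover have "(\<Prod>i\<in>{Inl n, Inr n}. \<integral>\<^sup>+\<omega>. H i (var i \<omega>) \<partial>M) =
      (\<integral>\<^sup>+\<omega>. ennreal (exp (-R * X n \<omega>)) \<partial>M) * (\<integral>\<^sup>+\<omega>. ennreal (exp (R * (Y n \<omega> / (1 + r)))) \<partial>M)"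
      by (simp add: H_def var_def)
    ultimately show ?thesis using eq by simp
  qed

  have E1: "(\<integral>\<^sup>+\<omega>. ennreal (exp (R * (Y n \<omega> / (1 + r) - X n \<omega>))) \<partial>M) \<le> 1"
    if n: "n \<ge> 1" for n
  proof -
    have a: "(\<integral>\<^sup>+\<omega>. ennreal (exp (-R * X n \<omega>)) \<partial>M) = (\<integral>\<^sup>+\<omega>. ennreal (exp (-R * X 1 \<omega>)) \<partial>M)"
      by (rule eqdist_lemma[where f="\<lambda>x. ennreal (exp (-R * x))" and n=n and Z=X and M=M, OF n _ rvX idX]) auto
    have b: "(\<integral>\<^sup>+\<omega>. ennreal (exp (R * (Y n \<omega> / (1 + r)))) \<partial>M) = (\<integral>\<^sup>+\<omega>. ennreal (exp (R * (Y 1 \<omega> / (1 + r)))) \<partial>M)"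
      by (rule eqdist_lemma[where f="\<lambda>x. ennreal (exp (R * (x / (1 + r))))" and n=n and Z=Y and M=M, OF n _ rvY idY]) auto
    show ?thesis using split_exp[OF n] split_exp[of 1] a b lundberg by simp
  qed

  have mgf: "(\<integral>\<^sup>+\<omega>. ennreal (exp (t * R * (Y n \<omega> / (1 + r) - X n \<omega>))) \<partial>M) \<le> 1"
    if n: "n \<ge> 1" and t0: "0 \<le> t" and t1: "t \<le> 1" for n t
  proof -
    have [measurable]: "X n \<in> borel_measurable M" "Y n \<in> borel_measurable M" using rvX rvY n by auto
    have pw: "exp (t * a) \<le> t * exp a + (1 - t)" for a :: real
      using convex_onD[OF exp_convex, of t 0 a] t0 t1 by (simp add: algebra_simps)
    have "(\<integral>\<^sup>+\<omega>. ennreal (exp (t * R * (Y n \<omega> / (1 + r) - X n \<omega>))) \<partial>M)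
        \<le> (\<integral>\<^sup>+\<omega>. ennreal t * ennreal (exp (R * (Y n \<omega> / (1 + r) - X n \<omega>))) + ennreal (1 - t) \<partial>M)"
    proof (rule nn_integral_mono)
      fix \<omega>
      have "exp (t * R * (Y n \<omega> / (1 + r) - X n \<omega>)) \<le> t * exp (R * (Y n \<omega> / (1 + r) - X n \<omega>)) + (1 - t)"
        using pw[of "R * (Y n \<omega> / (1 + r) - X n \<omega>)"] by (simp add: mult.assoc)
      then show "ennreal (exp (t * R * (Y n \<omega> / (1 + r) - X n \<omega>))) \<le> ennreal t * ennreal (exp (R * (Y n \<omega> / (1 + r) - X n \<omega>))) + ennreal (1 - t)"
        using t0 t1 by (simp add: ennreal_mult[symmetric] ennreal_plus[symmetric] del: ennreal_plus)
    qed
    also have "\<dots> = ennreal t * (\<integral>\<^sup>+\<omega>. ennreal (exp (R * (Y n \<omega> / (1 + r) - X n \<omega>))) \<partial>M) + ennreal (1 - t)"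
      by (simp add: nn_integral_add nn_integral_cmult P.emeasure_space_1)
    also have "\<dots> \<le> ennreal t * 1 + ennreal (1 - t)"
      by (intro add_mono mult_left_mono E1 n) auto
    also have "\<dots> = 1" using t0 t1 by (simp add: ennreal_plus[symmetric] del: ennreal_plus)
    finally show ?thesis .
  qed

  have step: "(\<integral>\<^sup>+\<omega>. ennreal (exp (-R * Fp u r (Suc k) (xw \<omega>))) \<partial>M) \<le> (\<integral>\<^sup>+\<omega>. ennreal (exp (-R * Fp u r k (xw \<omega>))) \<partial>M)" for k
  proof -
    define t where "t = (1/(1+r))^k"
    have t0: "0 \<le> t" and t1: "t \<le> 1" using r_pos by (auto simp: t_def power_le_one)
    define K where "K = (Inl ` {1..k} \<union> Inr ` {1..k} :: (nat+nat) set)"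
    define K1 where "K1 = ({Inl (Suc k), Inr (Suc k)} :: (nat+nat) set)"
    define Kf where "Kf = (\<lambda>j::nat. if j = 0 then K else K1)"
    define G0 where "G0 = (\<lambda>x. if Fp u r k x < 0 then 0 else ennreal (exp (-R * Fp u r k x)))"
    define G1 where "G1 = (\<lambda>x::nat+nat\<Rightarrow>real. ennreal (exp (t*R*(x (Inr (Suc k))/(1+r) - x (Inl (Suc k))))))"
    define G where "G = (\<lambda>j::nat. if j = 0 then G0 else G1)"
    have "P.indep_vars (\<lambda>j. PiM (Kf j) (\<lambda>_. borel)) (\<lambda>j \<omega>. restrict (\<lambda>i. var i \<omega>) (Kf j)) {0,1}"
      by (rule P.indep_vars_restrict[OF ind]) (auto simp: Kf_def K_def K1_def I_def disjoint_family_on_def)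
    then have "P.indep_vars (\<lambda>_. borel) (\<lambda>j \<omega>. G j (restrict (\<lambda>i. var i \<omega>) (Kf j))) {0,1}"
    proof (rule P.indep_vars_compose2)
      fix j :: nat assume "j \<in> {0,1}"
      show "G j \<in> borel_measurable (PiM (Kf j) (\<lambda>_. borel))"
      proof (cases "j = 0")
        case True
        have [measurable]: "(\<lambda>x. Fp u r k x) \<in> borel_measurable (PiM K (\<lambda>_. borel))"
          by (rule Fp_meas[where x="\<lambda>x. x", simplified]) (auto simp: K_def)
        show ?thesis using True unfolding G_def Kf_def G0_def by simp measurable
      next
        case False
        have [measurable]: "(\<lambda>x. x (Inl (Suc k))) \<in> borel_measurable (PiM K1 (\<lambda>_. borel))"
             "(\<lambda>x. x (Inr (Suc k))) \<in> borel_measurable (PiM K1 (\<lambda>_. borel))"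
          by (auto simp: K1_def)
        show ?thesis using False unfolding G_def Kf_def G1_def by simp measurable
      qed
    qed
    from P.indep_vars_nn_integral[OF _ this]
    have prod: "(\<integral>\<^sup>+\<omega>. (\<Prod>j\<in>{0,1}. G j (restrict (\<lambda>i. var i \<omega>) (Kf j))) \<partial>M)
       = (\<Prod>j\<in>{0::nat,1}. \<integral>\<^sup>+\<omega>. G j (restrict (\<lambda>i. var i \<omega>) (Kf j)) \<partial>M)" by simp
    have r0: "G0 (restrict (\<lambda>i. var i \<omega>) K) = G0 (xw \<omega>)" for \<omega>
    proof -
      have "Fp u r k (restrict (\<lambda>i. var i \<omega>) K) = Fp u r k (\<lambda>i. var i \<omega>)"
        by (rule Fp_restrict) (auto simp: K_def)
      then show ?thesis unfolding G0_def xw_def by simp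
    qed
    have r1: "G1 (restrict (\<lambda>i. var i \<omega>) K1) = G1 (xw \<omega>)" for \<omega>
      by (simp add: G1_def K1_def xw_def)
    have prod2: "(\<integral>\<^sup>+\<omega>. G0 (xw \<omega>) * G1 (xw \<omega>) \<partial>M) = (\<integral>\<^sup>+\<omega>. G0 (xw \<omega>) \<partial>M) * (\<integral>\<^sup>+\<omega>. G1 (xw \<omega>) \<partial>M)"
      using prod by (simp add: G_def Kf_def r0 r1)
    have G1le: "(\<integral>\<^sup>+\<omega>. G1 (xw \<omega>) \<partial>M) \<le> 1"
      using mgf[of "Suc k" t] t0 t1 by (simp add: G1_def xw_def var_def)
    define A0 where "A0 = (\<lambda>x. if Fp u r k x < 0 then ennreal (exp (-R * Fp u r k x)) else 0)"
    have [measurable]: "(\<lambda>\<omega>. X (Suc k) \<omega>) \<in> borel_measurable M" "(\<lambda>\<omega>. Y (Suc k) \<omega>) \<in> borel_measurable M"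
      using rvX rvY by auto
    have mA0[measurable]: "(\<lambda>\<omega>. A0 (xw \<omega>)) \<in> borel_measurable M" unfolding A0_def by measurable
    have mG0[measurable]: "(\<lambda>\<omega>. G0 (xw \<omega>)) \<in> borel_measurable M" unfolding G0_def by measurable
    have mG1[measurable]: "(\<lambda>\<omega>. G1 (xw \<omega>)) \<in> borel_measurable M" unfolding G1_def xw_def var_def by simp
    have pw: "ennreal (exp (-R * Fp u r (Suc k) x)) = A0 x + G0 x * G1 x" for x
    proof (cases "Fp u r k x < 0")
      case True
      then show ?thesis by (simp add: A0_def G0_def)
    next
      case False
      have "exp (-R * Fp u r (Suc k) x) = exp (-R * Fp u r k x) * exp (t*R*(x (Inr (Suc k))/(1+r) - x (Inl (Suc k))))"
        using False by (simp add: t_def exp_add[symmetric] algebra_simps)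
      then show ?thesis using False by (simp add: A0_def G0_def G1_def ennreal_mult)
    qed
    have pw2: "ennreal (exp (-R * Fp u r k x)) = A0 x + G0 x" for x
      by (simp add: A0_def G0_def)
    have "(\<integral>\<^sup>+\<omega>. ennreal (exp (-R * Fp u r (Suc k) (xw \<omega>))) \<partial>M)
        = (\<integral>\<^sup>+\<omega>. A0 (xw \<omega>) \<partial>M) + (\<integral>\<^sup>+\<omega>. G0 (xw \<omega>) * G1 (xw \<omega>) \<partial>M)"
      unfolding pw by (rule nn_integral_add) auto
    also have "\<dots> = (\<integral>\<^sup>+\<omega>. A0 (xw \<omega>) \<partial>M) + (\<integral>\<^sup>+\<omega>. G0 (xw \<omega>) \<partial>M) * (\<integral>\<^sup>+\<omega>. G1 (xw \<omega>) \<partial>M)"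
      by (simp only: prod2)
    also have "\<dots> \<le> (\<integral>\<^sup>+\<omega>. A0 (xw \<omega>) \<partial>M) + (\<integral>\<^sup>+\<omega>. G0 (xw \<omega>) \<partial>M) * 1"
      by (intro add_mono mult_left_mono G1le) auto
    also have "\<dots> = (\<integral>\<^sup>+\<omega>. ennreal (exp (-R * Fp u r k (xw \<omega>))) \<partial>M)"
      unfolding pw2 by (simp add: nn_integral_add)
    finally show "(\<integral>\<^sup>+\<omega>. ennreal (exp (-R * Fp u r (Suc k) (xw \<omega>))) \<partial>M) \<le> (\<integral>\<^sup>+\<omega>. ennreal (exp (-R * Fp u r k (xw \<omega>))) \<partial>M)" .
  qed

  have bound: "(\<integral>\<^sup>+\<omega>. ennreal (exp (-R * Fp u r n (xw \<omega>))) \<partial>M) \<le> ennreal (exp (-R*u))" for n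
  proof (induction n)
    case 0
    then show ?case by (simp add: P.emeasure_space_1)
  next
    case (Suc n)
    then show ?case using step[of n] by (rule order_trans[rotated])
  qed
  define A where "A n = {\<omega>\<in>space M. Fp u r n (xw \<omega>) < 0}" for n
  have Asets: "A n \<in> sets M" for n unfolding A_def by measurable
  have emA: "emeasure M (A n) \<le> ennreal (exp (-R*u))" for n
  proof -
    have "emeasure M (A n) = (\<integral>\<^sup>+\<omega>. indicator (A n) \<omega> \<partial>M)"
      using Asets by simp
    also have "\<dots> \<le> (\<integral>\<^sup>+\<omega>. ennreal (exp (-R * Fp u r n (xw \<omega>))) \<partial>M)"
    proof (rule nn_integral_mono)
      fix \<omega>
      show "indicator (A n) \<omega> \<le> ennreal (exp (-R * Fp u r n (xw \<omega>)))"
      proof (cases "\<omega> \<in> A n")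
        case True
        then have "Fp u r n (xw \<omega>) < 0" by (simp add: A_def)
        then have "-R * Fp u r n (xw \<omega>) \<ge> 0" using R_pos mult_pos_neg[of R "Fp u r n (xw \<omega>)"] by simp
        then have "exp (-R * Fp u r n (xw \<omega>)) \<ge> 1" by simp
        then show ?thesis using True by simp
      qed simp
    qed
    also have "\<dots> \<le> ennreal (exp (-R*u))" by (rule bound)
    finally show ?thesis .
  qed
  have inc: "incseq A"
  proof (rule incseq_SucI)
    fix n show "A n \<subseteq> A (Suc n)" by (auto simp: A_def)
  qed
  have U: "(\<Union>n\<in>{1..}. {\<omega> \<in> space M. surplus u r X Y n \<omega> < 0}) = (\<Union>n. A n)"
  proof -
    have "(\<exists>n\<in>{1..}. surplus u r X Y n \<omega> < 0) \<longleftrightarrow> (\<exists>n. Fp u r n (xw \<omega>) < 0)" for \<omega>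
    proof -
      have F: "(Fp u r n (xw \<omega>) < 0) = (\<exists>k\<in>{1..n}. surplus u r X Y k \<omega> < 0)" for n
        using Fp_surplus[OF r_pos u, where X=X and Y=Y and \<omega>=\<omega> and n=n] unfolding xw_eq by blast
      show ?thesis unfolding F
      proof
        assume "\<exists>n\<in>{1..}. surplus u r X Y n \<omega> < 0"
        then obtain n where "n \<in> {1..}" "surplus u r X Y n \<omega> < 0" by blast
        then show "\<exists>n. \<exists>k\<in>{1..n}. surplus u r X Y k \<omega> < 0" by (intro exI[of _ n] bexI[of _ n]) auto
      next
        assume "\<exists>n. \<exists>k\<in>{1..n}. surplus u r X Y k \<omega> < 0"
        then obtain n k where "k \<in> {1..n}" "surplus u r X Y k \<omega> < 0" by blast
        then show "\<exists>n\<in>{1..}. surplus u r X Y n \<omega> < 0" by (intro bexI[of _ k]) auto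
      qed
    qed
    then show ?thesis by (auto simp: A_def)
  qed
  have "emeasure M (\<Union>n. A n) = (SUP n. emeasure M (A n))"
  proof -
    have "range A \<subseteq> sets M" using Asets by auto
    from SUP_emeasure_incseq[OF this inc] show ?thesis by simp
  qed
  also have "\<dots> \<le> ennreal (exp (-R*u))" by (rule SUP_least) (rule emA)
  finally have "ennreal (ruin_prob M r X Y u) \<le> ennreal (exp (-R*u))"
    unfolding ruin_prob_def U using P.emeasure_eq_measure by simp
  then show "ruin_prob M r X Y u \<le> exp (- R * u)" by simp
qed

end
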